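(* Let $G=(V,E)$ be an undirected graph (finite or infinite) and $M=M(S)$ a multiplex of $G$ generated by a simplex $S$, with $\mathrm{rank}(M)\ge2$. Then for every $x\in\widetilde M$ there exist two color classes $\widehat A,\widehat B\subseteq M$ with $\widetilde A\setminus\widetilde B\neq\emptyset$ and $\widetilde B\setminus\widetilde A\neq\emptyset$ such that $x\in\widetilde A\cap\widetilde B$.
   Context: A graph $G=(V,E)$ has vertex set $V$ and edge set $E\subseteq V^2$; it is undirected if $E$ is irreflexive and symmetric. Implication classes: on $E$ define $(a,b)\Gamma(a',b')$ iff either $a=a'$ and $(b,b')\notin E$, or $b=b'$ and $(a,a')\notin E$; the classes of the transitive closure $\Gamma^*$ are the implication classes. For an implication class $A$, $A^{-1}=\{(b,a):(a,b)\in A\}$ and the color class is $\widehat A=A\cup A^{-1}$; $\widetilde A$ is the set of vertices spanned by $\widehat A$. A simplex of rank $r\ge1$ is a complete sub-graph $S=(V_S,E_S)$ of $G$ on $r+1$ vertices whose distinct undirected edges lie in distinct color classes. The multiplex generated by $S$ is $M(S)=\bigcup\{\widehat A:\widehat A\text{ a color class},\ \widehat A\cap E_S\neq\emptyset\}$, of rank $r$; $\widetilde M$ is the set of vertices spanned by $M$. *)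

theory Defs
  imports Main
begin

definition undirected_graph :: "'a set \<Rightarrow> ('a \<times> 'a) set \<Rightarrow> bool" where
  "undirected_graph V E \<longleftrightarrow> E \<subseteq> V \<times> V \<and> irrefl E \<and> sym E"

definition Gamma :: "('a \<times> 'a) set \<Rightarrow> (('a \<times> 'a) \<times> ('a \<times> 'a)) set" where
  "Gamma E = {((a,b),(a',b')). (a,b) \<in> E \<and> (a',b') \<in> E \<and>
      ((a = a' \<and> (b,b') \<notin> E) \<or> (b = b' \<and> (a,a') \<notin> E))}"

text \<open>Implication classes: classes of the transitive closure of Gamma
  (Gamma is reflexive on E, so the reflexive-transitive closure gives the same classes).\<close>
definition implication_class :: "('a \<times> 'a) set \<Rightarrow> ('a \<times> 'a) set \<Rightarrow> bool" where
  "implication_class E A \<longleftrightarrow> (\<exists>e \<in> E. A = (Gamma E)\<^sup>+ `` {e})"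

definition color_class_of :: "('a \<times> 'a) set \<Rightarrow> ('a \<times> 'a) set \<Rightarrow> bool" where
  "color_class_of E C \<longleftrightarrow> (\<exists>A. implication_class E A \<and> C = A \<union> A\<inverse>)"

definition span_vertices :: "('a \<times> 'a) set \<Rightarrow> 'a set" where
  "span_vertices F = {v. \<exists>(a,b) \<in> F. v = a \<or> v = b}"

definition simplex_edges :: "'a set \<Rightarrow> ('a \<times> 'a) set" where
  "simplex_edges VS = {(a,b). a \<in> VS \<and> b \<in> VS \<and> a \<noteq> b}"

definition is_simplex :: "'a set \<Rightarrow> ('a \<times> 'a) set \<Rightarrow> 'a set \<Rightarrow> nat \<Rightarrow> bool" where
  "is_simplex V E VS r \<longleftrightarrow> r \<ge> 1 \<and> finite VS \<and> card VS = r + 1 \<and> VS \<subseteq> V \<and>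
     simplex_edges VS \<subseteq> E \<and>
     (\<forall>a b c d. (a,b) \<in> simplex_edges VS \<and> (c,d) \<in> simplex_edges VS \<and> {a,b} \<noteq> {c,d} \<longrightarrow>
        \<not> (\<exists>C. color_class_of E C \<and> (a,b) \<in> C \<and> (c,d) \<in> C))"

definition multiplex :: "('a \<times> 'a) set \<Rightarrow> 'a set \<Rightarrow> ('a \<times> 'a) set" where
  "multiplex E VS = \<Union>{C. color_class_of E C \<and> C \<inter> simplex_edges VS \<noteq> {}}"

end

theory Submission
  imports Defs
begin

definition cls :: "('a \<times> 'a) set \<Rightarrow> 'a \<times> 'a \<Rightarrow> ('a \<times> 'a) set" where
  "cls E e = (Gamma E)\<^sup>+ `` {e}"

definition cc :: "('a \<times> 'a) set \<Rightarrow> 'a \<times> 'a \<Rightarrow> ('a \<times> 'a) set" where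
  "cc E e = cls E e \<union> (cls E e)\<inverse>"

locale ug =
  fixes V :: "'a set" and E :: "('a \<times> 'a) set"
  assumes ug: "undirected_graph V E"
begin

lemma symE: "(a,b) \<in> E \<Longrightarrow> (b,a) \<in> E"
  using ug unfolding undirected_graph_def sym_def by blast

lemma irrE: "(a,a) \<notin> E"
  using ug unfolding undirected_graph_def irrefl_def by blast

lemma G_sym: "(f,g) \<in> Gamma E \<Longrightarrow> (g,f) \<in> Gamma E"
  unfolding Gamma_def using symE by auto

lemma G_refl: "f \<in> E \<Longrightarrow> (f,f) \<in> Gamma E"
  unfolding Gamma_def using irrE by (cases f) auto

lemma G_E: "(f,g) \<in> Gamma E \<Longrightarrow> f \<in> E \<and> g \<in> E"
  unfolding Gamma_def by auto

lemma symG: "sym (Gamma E)"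
  using G_sym unfolding sym_def by blast

lemma cls_E: "f \<in> cls E e \<Longrightarrow> f \<in> E"
proof -
  assume "f \<in> cls E e"
  then have "(e,f) \<in> (Gamma E)\<^sup>+" unfolding cls_def by auto
  then obtain y where "(y,f) \<in> Gamma E" using tranclD2 by metis
  then show ?thesis using G_E by blast
qed

lemma cls_self: "e \<in> E \<Longrightarrow> e \<in> cls E e"
  unfolding cls_def using r_into_trancl[OF G_refl] by auto

lemma cls_eq: assumes "f \<in> cls E e" shows "cls E f = cls E e"
proof -
  have ef: "(e,f) \<in> (Gamma E)\<^sup>+" using assms unfolding cls_def by auto
  have fe: "(f,e) \<in> (Gamma E)\<^sup>+" using ef symG sym_trancl unfolding sym_def by blast
  show ?thesis unfolding cls_def using ef fe by (auto intro: trancl_trans)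
qed

lemma cls_step: "f \<in> cls E e \<Longrightarrow> (f,g) \<in> Gamma E \<Longrightarrow> g \<in> cls E e"
  unfolding cls_def by auto

lemma G_swap: "((a,b),(c,d)) \<in> Gamma E \<Longrightarrow> ((b,a),(d,c)) \<in> Gamma E"
  unfolding Gamma_def using symE by auto

lemma trancl_swap: "(f,g) \<in> (Gamma E)\<^sup>+ \<Longrightarrow> (prod.swap f, prod.swap g) \<in> (Gamma E)\<^sup>+"
proof (induction rule: trancl_induct)
  case (base y) then show ?case using G_swap by (cases f; cases y) auto
next
  case (step y z)
  then have "(prod.swap y, prod.swap z) \<in> Gamma E" using G_swap by (cases y; cases z) auto
  then show ?case using step by (meson trancl.trancl_into_trancl)
qed

lemma cls_swap: "(a,b) \<in> cls E (c,d) \<Longrightarrow> (b,a) \<in> cls E (d,c)"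
  unfolding cls_def using trancl_swap[of "(c,d)" "(a,b)"] by auto

lemma cc_eq: assumes "f \<in> cc E e" shows "cc E f = cc E e"
proof (cases "f \<in> cls E e")
  case True then show ?thesis unfolding cc_def using cls_eq by simp
next
  case False
  then have f: "prod.swap f \<in> cls E e" using assms unfolding cc_def by (cases f) auto
  have 1: "cls E (prod.swap f) = cls E e" using cls_eq[OF f] .
  have "cls E f = (cls E (prod.swap f))\<inverse>"
  proof
    show "cls E f \<subseteq> (cls E (prod.swap f))\<inverse>"
      using cls_swap by (cases f) auto
    show "(cls E (prod.swap f))\<inverse> \<subseteq> cls E f"
      using cls_swap by (cases f) fastforce
  qed
  then show ?thesis unfolding cc_def using 1 by auto
qed

lemma cc_self: "e \<in> E \<Longrightarrow> e \<in> cc E e"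
  unfolding cc_def using cls_self by auto

lemma cc_swap: "(a,b) \<in> cc E e \<Longrightarrow> (b,a) \<in> cc E e"
  unfolding cc_def by auto

lemma cc_E: "f \<in> cc E e \<Longrightarrow> f \<in> E"
proof -
  assume "f \<in> cc E e"
  then have "f \<in> cls E e \<or> prod.swap f \<in> cls E e" unfolding cc_def by (cases f) auto
  then show ?thesis using cls_E[of f e] cls_E[of "prod.swap f" e] symE by (cases f) auto
qed

lemma ccof: "color_class_of E C \<longleftrightarrow> (\<exists>e\<in>E. C = cc E e)"
  unfolding color_class_of_def implication_class_def cc_def cls_def by auto

lemma triangle_claim:
  assumes ab: "(a,b) \<in> E" and bc: "(b,c) \<in> E" and ac: "(a,c) \<in> E"
    and n1: "(a,b) \<notin> cc E (b,c)" and n2: "(a,c) \<notin> cc E (b,c)"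
    and f: "((b,c),f) \<in> (Gamma E)\<^sup>*"
  shows "(a, fst f) \<in> cls E (a,b) \<and> (a, snd f) \<in> cls E (a,c)"
  using f
proof (induction rule: rtrancl_induct)
  case base then show ?case using cls_self ab ac by auto
next
  case (step y z)
  obtain b' c' where y: "y = (b',c')" by (cases y)
  obtain u v where z: "z = (u,v)" by (cases z)
  have IH1: "(a,b') \<in> cls E (a,b)" and IH2: "(a,c') \<in> cls E (a,c)" using step y by auto
  have zin: "(u,v) \<in> cls E (b,c)" using step z unfolding cls_def
    by (auto intro: rtrancl_into_trancl1)
  have zE: "(u,v) \<in> E" using zin cls_E by blast
  have cases: "(u = b' \<and> (c',v) \<notin> E) \<or> (v = c' \<and> (b',u) \<notin> E)"
    using step(2) y z unfolding Gamma_def by auto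
  then show ?case
  proof
    assume h: "u = b' \<and> (c',v) \<notin> E"
    have "(a,v) \<in> E"
    proof (rule ccontr)
      assume nv: "(a,v) \<notin> E"
      have "(b',a) \<in> E" using IH1 cls_E symE by blast
      then have "((b',v),(b',a)) \<in> Gamma E" using nv zE h symE unfolding Gamma_def by auto
      then have "(b',a) \<in> cls E (b,c)" using zin h cls_step by auto
      then have "(a,b') \<in> cc E (b,c)" unfolding cc_def by auto
      moreover have "(a,b') \<in> cc E (a,b)" using IH1 unfolding cc_def by auto
      ultimately have "cc E (b,c) = cc E (a,b)" using cc_eq by metis
      then show False using n1 cc_self ab by auto
    qed
    moreover have "(a,c') \<in> E" using IH2 cls_E by blast
    ultimately have "((a,c'),(a,v)) \<in> Gamma E" using h unfolding Gamma_def by auto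
    then have "(a,v) \<in> cls E (a,c)" using IH2 cls_step by auto
    then show ?case using IH1 h z by auto
  next
    assume h: "v = c' \<and> (b',u) \<notin> E"
    have "(a,u) \<in> E"
    proof (rule ccontr)
      assume nu: "(a,u) \<notin> E"
      have "(a,c') \<in> E" using IH2 cls_E by blast
      then have "((u,c'),(a,c')) \<in> Gamma E" using nu zE h symE unfolding Gamma_def by auto
      then have "(a,c') \<in> cls E (b,c)" using zin h cls_step by auto
      then have "(a,c') \<in> cc E (b,c)" unfolding cc_def by auto
      moreover have "(a,c') \<in> cc E (a,c)" using IH2 unfolding cc_def by auto
      ultimately have "cc E (b,c) = cc E (a,c)" using cc_eq by metis
      then show False using n2 cc_self ac by auto
    qed
    moreover have "(a,b') \<in> E" using IH1 cls_E by blast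
    ultimately have "((a,b'),(a,u)) \<in> Gamma E" using h unfolding Gamma_def by auto
    then have "(a,u) \<in> cls E (a,b)" using IH1 cls_step by auto
    then show ?case using IH2 h z by auto
  qed
qed

lemma triangle_cls:
  assumes ab: "(a,b) \<in> E" and bc: "(b,c) \<in> E" and ac: "(a,c) \<in> E"
    and n1: "(a,b) \<notin> cc E (b,c)" and n2: "(a,c) \<notin> cc E (b,c)"
    and f: "(u,v) \<in> cls E (b,c)"
  shows "(a,u) \<in> cls E (a,b) \<and> (a,v) \<in> cls E (a,c)"
proof -
  have "((b,c),(u,v)) \<in> (Gamma E)\<^sup>*" using f trancl_into_rtrancl unfolding cls_def by auto
  then show ?thesis using triangle_claim[OF assms(1-5), of "(u,v)"] by simp
qed

lemma triangle_span:
  assumes ab: "(a,b) \<in> E" and bc: "(b,c) \<in> E" and ac: "(a,c) \<in> E"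
    and n1: "(a,b) \<notin> cc E (b,c)" and n2: "(a,c) \<notin> cc E (b,c)"
  shows "a \<notin> span_vertices (cc E (b,c))"
    and "x \<in> span_vertices (cc E (b,c)) \<Longrightarrow>
          x \<in> span_vertices (cc E (a,b)) \<or> x \<in> span_vertices (cc E (a,c))"
proof -
  have key: "\<And>u v. (u,v) \<in> cls E (b,c) \<Longrightarrow> (a,u) \<in> cls E (a,b) \<and> (a,v) \<in> cls E (a,c)"
    using triangle_cls[OF assms] by blast
  show "a \<notin> span_vertices (cc E (b,c))"
  proof
    assume "a \<in> span_vertices (cc E (b,c))"
    then obtain u v where uv: "(u,v) \<in> cls E (b,c)" and "a = u \<or> a = v"
      unfolding span_vertices_def cc_def by auto
    then show False using key[OF uv] cls_E irrE by blast
  qed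
  assume "x \<in> span_vertices (cc E (b,c))"
  then obtain u v where uv: "(u,v) \<in> cls E (b,c)" and "x = u \<or> x = v"
    unfolding span_vertices_def cc_def by auto
  then show "x \<in> span_vertices (cc E (a,b)) \<or> x \<in> span_vertices (cc E (a,c))"
    using key[OF uv] unfolding span_vertices_def cc_def by blast
qed

end

theorem proposition4p3:
  fixes V :: "'a set" and E :: "('a \<times> 'a) set" and VS :: "'a set" and r :: nat
  assumes "undirected_graph V E"
    and "is_simplex V E VS r"
    and "r \<ge> 2"
    and "x \<in> span_vertices (multiplex E VS)"
  shows "\<exists>A B. color_class_of E A \<and> color_class_of E B \<and>
           A \<subseteq> multiplex E VS \<and> B \<subseteq> multiplex E VS \<and>
           span_vertices A - span_vertices B \<noteq> {} \<and>
           span_vertices B - span_vertices A \<noteq> {} \<and>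
           x \<in> span_vertices A \<inter> span_vertices B"
proof -
  interpret ug V E using assms(1) by unfold_locales
  have SE: "\<And>a b. a \<in> VS \<Longrightarrow> b \<in> VS \<Longrightarrow> a \<noteq> b \<Longrightarrow> (a,b) \<in> E"
    using assms(2) unfolding is_simplex_def simplex_edges_def by auto
  have dist: "\<And>a b c d C. (a,b) \<in> simplex_edges VS \<Longrightarrow> (c,d) \<in> simplex_edges VS \<Longrightarrow>
      {a,b} \<noteq> {c,d} \<Longrightarrow> color_class_of E C \<Longrightarrow> (a,b) \<in> C \<Longrightarrow> (c,d) \<notin> C"
    using assms(2) unfolding is_simplex_def by blast
  have ncc: "(a,b) \<notin> cc E (b,c)" if "a \<in> VS" "b \<in> VS" "c \<in> VS" "a \<noteq> b" "b \<noteq> c" "a \<noteq> c"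
    for a b c
  proof -
    have "color_class_of E (cc E (b,c))" using ccof SE that by blast
    moreover have "(b,c) \<in> cc E (b,c)" using cc_self SE that by blast
    moreover have "{b,c} \<noteq> {a,b}" using that by (auto simp: doubleton_eq_iff)
    ultimately show ?thesis using dist[of b c a b] that unfolding simplex_edges_def by auto
  qed
  have tri: "a \<notin> span_vertices (cc E (b,c)) \<and> (\<forall>x. x \<in> span_vertices (cc E (b,c)) \<longrightarrow>
          x \<in> span_vertices (cc E (a,b)) \<or> x \<in> span_vertices (cc E (a,c)))"
    if "a \<in> VS" "b \<in> VS" "c \<in> VS" "a \<noteq> b" "b \<noteq> c" "a \<noteq> c" for a b c
  proof -
    have n2: "(a,c) \<notin> cc E (b,c)"
    proof
      assume h: "(a,c) \<in> cc E (b,c)"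
      have "color_class_of E (cc E (b,c))" using ccof SE that by blast
      moreover have "(b,c) \<in> cc E (b,c)" using cc_self SE that by blast
      moreover have "{b,c} \<noteq> {a,c}" using that by (auto simp: doubleton_eq_iff)
      ultimately show False using dist[of b c a c] h that unfolding simplex_edges_def by auto
    qed
    show ?thesis using triangle_span[OF SE SE SE ncc n2] that by blast
  qed
  have inM: "cc E (a,b) \<subseteq> multiplex E VS" if "a \<in> VS" "b \<in> VS" "a \<noteq> b" for a b
  proof -
    have "color_class_of E (cc E (a,b))" using ccof SE that by blast
    moreover have "(a,b) \<in> cc E (a,b) \<inter> simplex_edges VS"
      using cc_self SE that unfolding simplex_edges_def by auto
    ultimately show ?thesis unfolding multiplex_def by blast
  qed
  have spn: "a \<in> span_vertices (cc E (a,b)) \<and> b \<in> span_vertices (cc E (a,b))"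
    if "a \<in> VS" "b \<in> VS" "a \<noteq> b" for a b
    using cc_self SE that unfolding span_vertices_def by blast
  obtain C where C: "color_class_of E C" "C \<inter> simplex_edges VS \<noteq> {}" "x \<in> span_vertices C"
    using assms(4) unfolding multiplex_def span_vertices_def by blast
  obtain p q where pq: "(p,q) \<in> C" "p \<in> VS" "q \<in> VS" "p \<noteq> q"
    using C(2) unfolding simplex_edges_def by auto
  have Ceq: "C = cc E (p,q)" using C(1) pq(1) cc_eq unfolding ccof by metis
  have "card VS \<ge> 3" using assms(2,3) unfolding is_simplex_def by auto
  have "\<not> VS \<subseteq> {p,q}"
  proof
    assume "VS \<subseteq> {p,q}"
    then have "card VS \<le> card {p,q}" by (intro card_mono) auto
    also have "... \<le> 2" by (simp add: card_insert_le_m1)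
    finally show False using \<open>card VS \<ge> 3\<close> by simp
  qed
  then obtain s where s: "s \<in> VS" "s \<noteq> p" "s \<noteq> q" by auto
  have xA: "x \<in> span_vertices (cc E (p,q))" using C(3) Ceq by simp
  have sA: "s \<notin> span_vertices (cc E (p,q))" using tri[of s p q] s pq by blast
  have "x \<in> span_vertices (cc E (s,p)) \<or> x \<in> span_vertices (cc E (s,q))"
    using tri[of s p q] s pq xA by blast
  then show ?thesis
  proof
    assume xB: "x \<in> span_vertices (cc E (s,p))"
    have "q \<notin> span_vertices (cc E (s,p))" using tri[of q s p] s pq by blast
    have c1: "color_class_of E (cc E (p,q))" using ccof SE pq by blast
    have c2: "color_class_of E (cc E (s,p))" using ccof SE pq s by blast
    have m1: "cc E (p,q) \<subseteq> multiplex E VS" using inM pq by blast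
    have m2: "cc E (s,p) \<subseteq> multiplex E VS" using inM pq s by blast
    have d1: "q \<in> span_vertices (cc E (p,q)) - span_vertices (cc E (s,p))"
      using spn[of p q] pq \<open>q \<notin> span_vertices (cc E (s,p))\<close> by blast
    have d2: "s \<in> span_vertices (cc E (s,p)) - span_vertices (cc E (p,q))"
      using spn[of s p] pq s sA by blast
    show ?thesis
      apply (rule exI[of _ "cc E (p,q)"], rule exI[of _ "cc E (s,p)"])
      using c1 c2 m1 m2 d1 d2 xA xB by blast
  next
    assume xB: "x \<in> span_vertices (cc E (s,q))"
    have "p \<notin> span_vertices (cc E (s,q))" using tri[of p s q] s pq by blast
    have c1: "color_class_of E (cc E (p,q))" using ccof SE pq by blast
    have c2: "color_class_of E (cc E (s,q))" using ccof SE pq s by blast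
    have m1: "cc E (p,q) \<subseteq> multiplex E VS" using inM pq by blast
    have m2: "cc E (s,q) \<subseteq> multiplex E VS" using inM pq s by blast
    have d1: "p \<in> span_vertices (cc E (p,q)) - span_vertices (cc E (s,q))"
      using spn[of p q] pq \<open>p \<notin> span_vertices (cc E (s,q))\<close> by blast
    have d2: "s \<in> span_vertices (cc E (s,q)) - span_vertices (cc E (p,q))"
      using spn[of s q] pq s sA by blast
    show ?thesis
      apply (rule exI[of _ "cc E (p,q)"], rule exI[of _ "cc E (s,q)"])
      using c1 c2 m1 m2 d1 d2 xA xB by blast
  qed
qed

end
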